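(* Let $E$ be a set and regard the power set $\mathscr{P}(E)$ as the Boolean ring $(\mathbf{Z}/2\mathbf{Z})^E$, with addition the symmetric difference, multiplication the intersection, $0=\emptyset$ and $1=-1=E$. For $X\subseteq \mathscr{P}(E)$ set $\mathcal{R}(X)=X\cup\{-1,0,1\}\cup\{x+y : x,y\in X\}\cup\{xy : x,y\in X\}$. Let $(\mathscr{X}_i)_{i\in\mathbf{N}}$ be an increasing sequence of subsets of $\mathscr{P}(E)$ such that $\mathcal{R}(\mathscr{X}_i)\subseteq\mathscr{X}_{i+1}$ for all $i$ and $\bigcup_{i\in\mathbf{N}}\mathscr{X}_i=\mathscr{P}(E)$. Then $\mathscr{P}(E)=\mathscr{X}_i$ for some $i$. *)

theory Defs
  imports Main
begin

definition bool_add :: "'a set \<Rightarrow> 'a set \<Rightarrow> 'a set" where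
  "bool_add x y = (x - y) \<union> (y - x)"

definition bool_mul :: "'a set \<Rightarrow> 'a set \<Rightarrow> 'a set" where
  "bool_mul x y = x \<inter> y"

definition bool_zero :: "'a set" where
  "bool_zero = {}"

definition bool_one :: "'a set \<Rightarrow> 'a set" where
  "bool_one E = E"

definition bool_neg_one :: "'a set \<Rightarrow> 'a set" where
  "bool_neg_one E = E"

definition ring_step :: "'a set \<Rightarrow> 'a set set \<Rightarrow> 'a set set" where
  "ring_step E X = X \<union> {bool_neg_one E, bool_zero, bool_one E}
     \<union> {bool_add x y | x y. x \<in> X \<and> y \<in> X}
     \<union> {bool_mul x y | x y. x \<in> X \<and> y \<in> X}"

end

theory Submission
  imports Defs
begin

locale xchain =
  fixes E :: "'a set" and X :: "nat \<Rightarrow> 'a set set"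
  assumes sub: "\<And>i. X i \<subseteq> Pow E"
    and incr: "\<And>i. X i \<subseteq> X (Suc i)"
    and step: "\<And>i. ring_step E (X i) \<subseteq> X (Suc i)"
    and cover: "(\<Union>i. X i) = Pow E"
begin

definition good :: "'a set \<Rightarrow> bool" where
  "good S \<longleftrightarrow> (\<exists>n. Pow S \<subseteq> X n)"

lemma mono: "m \<le> n \<Longrightarrow> X m \<subseteq> X n"
  by (rule lift_Suc_mono_le[of X, OF incr])
lemma add_in: "x \<in> X n \<Longrightarrow> y \<in> X n \<Longrightarrow> bool_add x y \<in> X (Suc n)"
proof -
  assume "x \<in> X n" "y \<in> X n"
  then have "bool_add x y \<in> ring_step E (X n)" unfolding ring_step_def by auto
  then show ?thesis using step by blast
qed
lemma mul_in: "x \<in> X n \<Longrightarrow> y \<in> X n \<Longrightarrow> bool_mul x y \<in> X (Suc n)"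
proof -
  assume "x \<in> X n" "y \<in> X n"
  then have "bool_mul x y \<in> ring_step E (X n)" unfolding ring_step_def by auto
  then show ?thesis using step by blast
qed
lemma zero_in: "{} \<in> X (Suc n)"
proof -
  have "bool_zero \<in> ring_step E (X n)" unfolding ring_step_def by auto
  then show ?thesis using step unfolding bool_zero_def by blast
qed
lemma cov: "S \<subseteq> E \<Longrightarrow> \<exists>n. S \<in> X n"
  using cover by blast

lemma union_good:
  assumes A: "Pow A \<subseteq> X n" and B: "Pow B \<subseteq> X n"
  shows "Pow (A \<union> B) \<subseteq> X (Suc n)"
proof
  fix Q assume Q: "Q \<in> Pow (A \<union> B)"
  have eq: "bool_add (Q \<inter> A) (Q - A) = Q" by (auto simp: bool_add_def)
  have 1: "Q \<inter> A \<in> X n" using A by blast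
  have 2: "Q - A \<in> X n" using B Q by blast
  have "bool_add (Q \<inter> A) (Q - A) \<in> X (Suc n)" using add_in[OF 1 2] .
  then show "Q \<in> X (Suc n)" by (simp only: eq)
qed

lemma good_union:
  assumes "good A" "good B" shows "good (A \<union> B)"
proof -
  obtain n1 where 1: "Pow A \<subseteq> X n1" using assms(1) unfolding good_def by blast
  obtain n2 where 2: "Pow B \<subseteq> X n2" using assms(2) unfolding good_def by blast
  have "Pow A \<subseteq> X (max n1 n2)" using 1 mono[of n1 "max n1 n2"] by auto
  moreover have "Pow B \<subseteq> X (max n1 n2)" using 2 mono[of n2 "max n1 n2"] by auto
  ultimately have "Pow (A \<union> B) \<subseteq> X (Suc (max n1 n2))" by (rule union_good)
  then show ?thesis unfolding good_def by blast
qed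

lemma disj_bad:
  fixes A :: "nat \<Rightarrow> 'a set"
  assumes AE: "\<And>k. A k \<subseteq> E" and dis: "\<And>k l. k \<noteq> l \<Longrightarrow> A k \<inter> A l = {}"
    and bad: "\<And>k. \<not> good (A k)"
  shows False
proof -
  have "\<exists>j. A k \<in> X j" for k using cov AE by blast
  then obtain j where j: "\<And>k. A k \<in> X (j k)" by metis
  have "\<exists>B. B \<subseteq> A k \<and> B \<notin> X (Suc (max k (j k)))" for k
    using bad[of k] unfolding good_def by blast
  then obtain B where B: "\<And>k. B k \<subseteq> A k" "\<And>k. B k \<notin> X (Suc (max k (j k)))" by metis
  have "(\<Union>k. B k) \<subseteq> E" using B(1) AE by (meson UN_least subset_trans)
  then obtain m where m: "(\<Union>k. B k) \<in> X m" using cov by blast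
  have eq: "bool_mul (\<Union>k. B k) (A m) = B m"
  proof
    show "bool_mul (\<Union>k. B k) (A m) \<subseteq> B m"
    proof
      fix x assume "x \<in> bool_mul (\<Union>k. B k) (A m)"
      then obtain k where k: "x \<in> B k" "x \<in> A m" unfolding bool_mul_def by blast
      have "x \<in> A k" using k(1) B(1)[of k] by blast
      then have "k = m" using dis[of k m] k(2) by blast
      then show "x \<in> B m" using k(1) by simp
    qed
    show "B m \<subseteq> bool_mul (\<Union>k. B k) (A m)"
      unfolding bool_mul_def using B(1)[of m] by blast
  qed
  have "(\<Union>k. B k) \<in> X (max m (j m))" using m mono[of m "max m (j m)"] by auto
  moreover have "A m \<in> X (max m (j m))" using j mono[of "j m" "max m (j m)"] by auto
  ultimately have "bool_mul (\<Union>k. B k) (A m) \<in> X (Suc (max m (j m)))" by (rule mul_in)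
  with eq B(2) show False by simp
qed

lemma step2:
  assumes "\<not> good E"
  shows "\<exists>R \<subseteq> E. \<not> good R \<and> (\<forall>S \<subseteq> R. good S \<or> good (R - S))"
proof (rule ccontr)
  assume "\<not> ?thesis"
  hence H: "\<And>R. R \<subseteq> E \<Longrightarrow> \<not> good R \<Longrightarrow> \<exists>S \<subseteq> R. \<not> good S \<and> \<not> good (R - S)" by blast
  define sp where "sp R = (SOME S. S \<subseteq> R \<and> \<not> good S \<and> \<not> good (R - S))" for R
  define Rs where "Rs = rec_nat E (\<lambda>k R. R - sp R)"
  have Rs0: "Rs 0 = E" and RsS: "Rs (Suc k) = Rs k - sp (Rs k)" for k by (simp_all add: Rs_def)
  have sp: "sp R \<subseteq> R \<and> \<not> good (sp R) \<and> \<not> good (R - sp R)" if "R \<subseteq> E" "\<not> good R" for R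
    unfolding sp_def by (rule someI_ex) (use H that in blast)
  have Rsb: "Rs k \<subseteq> E \<and> \<not> good (Rs k)" for k
  proof (induction k)
    case 0 then show ?case using assms by (simp add: Rs0)
  next
    case (Suc k) then show ?case using sp[of "Rs k"] by (auto simp: RsS)
  qed
  have Rsmono: "k \<le> l \<Longrightarrow> Rs l \<subseteq> Rs k" for k l
    using lift_Suc_antimono_le[of Rs] RsS by blast
  define A where "A k = sp (Rs k)" for k
  have AE: "A k \<subseteq> E" for k using sp[of "Rs k"] Rsb[of k] unfolding A_def by blast
  have Ab: "\<not> good (A k)" for k using sp[of "Rs k"] Rsb[of k] unfolding A_def by blast
  have lt: "A k \<inter> A l = {}" if "k < l" for k l
  proof -
    have "A l \<subseteq> Rs l" using sp[of "Rs l"] Rsb[of l] unfolding A_def by blast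
    also have "\<dots> \<subseteq> Rs (Suc k)" using Rsmono that by simp
    also have "\<dots> = Rs k - A k" by (simp add: RsS A_def)
    finally show ?thesis by blast
  qed
  have "A k \<inter> A l = {}" if "k \<noteq> l" for k l
  proof (cases "k < l")
    case True then show ?thesis using lt by blast
  next
    case False then have "l < k" using that by simp
    then show ?thesis using lt[of l k] by blast
  qed
  then show False using disj_bad[OF AE _ Ab] by blast
qed

lemma step3:
  assumes RE: "R \<subseteq> E" and Rb: "\<not> good R" and U: "\<forall>S \<subseteq> R. good S \<or> good (R - S)"
  shows False
proof -
  obtain r where r: "R \<in> X r" using cov RE by blast
  have C: "\<exists>Y \<subseteq> R. good Y \<and> \<not> Pow Y \<subseteq> X N" for N
  proof -
    from Rb obtain Z where Z: "Z \<subseteq> R" "Z \<notin> X (Suc (max N r))" unfolding good_def by blast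
    from U Z(1) have "good Z \<or> good (R - Z)" by blast
    then show ?thesis
    proof
      assume "good Z"
      moreover have "Z \<notin> X N" using Z(2) mono[of N "Suc (max N r)"] by fastforce
      ultimately show ?thesis using Z(1) by blast
    next
      assume g: "good (R - Z)"
      have "\<not> Pow (R - Z) \<subseteq> X N"
      proof
        assume "Pow (R - Z) \<subseteq> X N"
        hence "R - Z \<in> X (max N r)" using mono[of N "max N r"] by auto
        moreover have "R \<in> X (max N r)" using r mono[of r "max N r"] by auto
        ultimately have "bool_add R (R - Z) \<in> X (Suc (max N r))" using add_in by blast
        moreover have "bool_add R (R - Z) = Z" using Z(1) by (auto simp: bool_add_def)
        ultimately show False using Z(2) by simp
      qed
      then show ?thesis using g by blast
    qed
  qed
  define gam where "gam S = (LEAST n. Pow S \<subseteq> X n)" for S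
  define nxt where "nxt j S = (SOME Y. Y \<subseteq> R \<and> good Y \<and> \<not> Pow Y \<subseteq> X (Suc (Suc (max j (gam S)))))" for j S
  define V where "V = rec_nat {} (\<lambda>j S. S \<union> nxt j S)"
  have V0: "V 0 = {}" and VS: "V (Suc j) = V j \<union> nxt j (V j)" for j by (simp_all add: V_def)
  have nxt: "nxt j S \<subseteq> R \<and> good (nxt j S) \<and> \<not> Pow (nxt j S) \<subseteq> X (Suc (Suc (max j (gam S))))" for j S
    unfolding nxt_def by (rule someI_ex) (use C in blast)
  have Vgood: "V j \<subseteq> R \<and> good (V j)" for j
  proof (induction j)
    case 0
    have "Pow {} \<subseteq> X 1" using zero_in[of 0] by auto
    then show ?case unfolding good_def by (auto simp: V0)
  next
    case (Suc j) then show ?case using nxt[of j "V j"] good_union by (auto simp: VS)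
  qed
  have gamV: "Pow (V j) \<subseteq> X (gam (V j))" for j
    unfolding gam_def using Vgood[of j] unfolding good_def by (meson LeastI_ex)
  have Vmono: "j \<le> k \<Longrightarrow> V j \<subseteq> V k" for j k
    using lift_Suc_mono_le[of V] VS by blast
  have Vbad: "\<not> Pow (V (Suc j)) \<subseteq> X (Suc (Suc (max j (gam (V j)))))" for j
    using nxt[of j "V j"] by (auto simp: VS)
  have key: False if sb: "V (Suc i) \<subseteq> T \<union> V i" and T: "Pow T \<subseteq> X m" and mi: "m \<le> i" for T m i
  proof -
    let ?g = "max i (gam (V i))"
    have mg: "m \<le> ?g" using mi by simp
    have "Pow T \<subseteq> X ?g" using T mono[OF mg] by blast
    moreover have "Pow (V i) \<subseteq> X ?g" using gamV[of i] mono[of "gam (V i)" ?g] by auto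
    ultimately have "Pow (T \<union> V i) \<subseteq> X (Suc ?g)" by (rule union_good)
    also have "\<dots> \<subseteq> X (Suc (Suc ?g))" using incr by blast
    finally have "Pow (V (Suc i)) \<subseteq> X (Suc (Suc ?g))" using sb by blast
    then show False using Vbad[of i] by blast
  qed
  define P where "P = {x. \<exists>j. even j \<and> x \<in> V (Suc j) \<and> x \<notin> V j}"
  have "P \<subseteq> R" using Vgood unfolding P_def by blast
  have "good P \<or> good (R - P)" using U \<open>P \<subseteq> R\<close> by blast
  then show False
  proof
    assume "good P"
    then obtain m where m: "Pow P \<subseteq> X m" unfolding good_def by blast
    have ev: "even (2*m)" by simp
    have "V (Suc (2*m)) \<subseteq> P \<union> V (2*m)" unfolding P_def using ev by blast
    then show False using key[of "2*m" P m] m by simp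
  next
    assume "good (R - P)"
    then obtain m where m: "Pow (R - P) \<subseteq> X m" unfolding good_def by blast
    let ?i = "Suc (2*m)"
    have "V (Suc ?i) \<subseteq> (R - P) \<union> V ?i"
    proof
      fix x assume x: "x \<in> V (Suc ?i)"
      show "x \<in> (R - P) \<union> V ?i"
      proof (cases "x \<in> V ?i")
        case False
        have "x \<in> R" using x Vgood by blast
        moreover have "x \<notin> P"
        proof
          assume "x \<in> P"
          then obtain j where j: "even j" "x \<in> V (Suc j)" "x \<notin> V j" unfolding P_def by blast
          have "j \<noteq> ?i" using j(1) by auto
          then consider "Suc j \<le> ?i" | "Suc ?i \<le> j" by linarith
          then show False
          proof cases
            case 1 then show False using Vmono[of "Suc j" ?i] j(2) False by blast
          next
            case 2 then show False using Vmono[of "Suc ?i" j] j(3) x by blast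
          qed
        qed
        ultimately show ?thesis by blast
      qed simp
    qed
    then show False using key[of ?i "R - P" m] m by simp
  qed
qed

end

theorem mainTheorem5:
  fixes E :: "'a set" and X :: "nat \<Rightarrow> 'a set set"
  assumes sub: "\<And>i. X i \<subseteq> Pow E"
    and incr: "\<And>i. X i \<subseteq> X (Suc i)"
    and step: "\<And>i. ring_step E (X i) \<subseteq> X (Suc i)"
    and cover: "(\<Union>i. X i) = Pow E"
  shows "\<exists>i. Pow E = X i"
proof (rule ccontr)
  assume nt: "\<not> ?thesis"
  interpret xchain E X using assms by unfold_locales
  have "\<not> good E"
  proof
    assume "good E"
    then obtain n where "Pow E \<subseteq> X n" unfolding good_def by blast
    with sub[of n] nt show False by blast
  qed
  then obtain R where "R \<subseteq> E" "\<not> good R" "\<forall>S \<subseteq> R. good S \<or> good (R - S)"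
    using step2 by blast
  then show False using step3 by blast
qed

end
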